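(* Let $\mathbf{O}\,\dot\cup\,\mathbf{S}$ be a finite set of categorical variables, $\mathcal{G}$ a DAG over $\mathbf{O}\cup\mathbf{S}$, $\hat{\mathbf{s}}$ a fixed value of $\mathbf{S}$, and $\mathcal{G}'$ the subgraph of $\mathcal{G}$ obtained by removing all edges out of nodes in $\mathbf{S}$. Then $\mathbf{BN}(\mathcal{G}')[^{\mathbf{S}=\hat{\mathbf{s}}}=\mathbf{BN}(\mathcal{G})[^{\mathbf{S}=\hat{\mathbf{s}}}$.
   Context: $\mathbf{BN}(\mathcal{G})$ is the set of distributions $P$ over the nodes of DAG $\mathcal{G}$ satisfying the Markov condition: each variable is independent of its non-descendants that are not parents, given its parents (equivalently, $p(\mathbf{x})=\prod_X p(x\mid \mathrm{pa}_{\mathcal{G}}(X))$). For a model $\mathbf{M}$ over $\mathbf{O}\cup\mathbf{S}$, $\mathbf{M}[^{\mathbf{S}=\hat{\mathbf{s}}}$ (selection) is the set of distributions $Q$ over $\mathbf{O}$ such that there is $P\in\mathbf{M}$ with $p(\hat{\mathbf{s}})>0$ and $q(\mathbf{o})=p(\mathbf{o}\mid\hat{\mathbf{s}})$ for all $\mathbf{o}$. *)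

theory Defs
  imports Complex_Main "HOL-Library.FuncSet"
begin

text \<open>Variables have type 'v; every variable X has a finite nonempty set of
categories D X (values of type 'a). A joint assignment to a variable set V is
an element of PiE V D.\<close>

definition is_dist :: "'v set \<Rightarrow> ('v \<Rightarrow> 'a set) \<Rightarrow> (('v \<Rightarrow> 'a) \<Rightarrow> real) \<Rightarrow> bool" where
  "is_dist V D P \<longleftrightarrow> (\<forall>x. P x \<ge> 0) \<and> (\<forall>x. x \<notin> PiE V D \<longrightarrow> P x = 0)
     \<and> sum P (PiE V D) = 1"

text \<open>Marginal probability p(x_A) of the values that x assigns to A.\<close>
definition marg :: "'v set \<Rightarrow> ('v \<Rightarrow> 'a set) \<Rightarrow> (('v \<Rightarrow> 'a) \<Rightarrow> real) \<Rightarrow> 'v set \<Rightarrow> ('v \<Rightarrow> 'a) \<Rightarrow> real" where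
  "marg V D P A x = sum P {y \<in> PiE V D. \<forall>a\<in>A. y a = x a}"

definition parents :: "('v \<times> 'v) set \<Rightarrow> 'v \<Rightarrow> 'v set" where
  "parents E X = {Y. (Y, X) \<in> E}"

definition is_DAG :: "'v set \<Rightarrow> ('v \<times> 'v) set \<Rightarrow> bool" where
  "is_DAG V E \<longleftrightarrow> E \<subseteq> V \<times> V \<and> acyclic E"

text \<open>BN(G): distributions with p(x) = prod_X p(x_X | x_pa(X)), where the
conditional is the ratio of marginals (if p(x_pa(X)) = 0 the factor is 0,
and so is p(x)).\<close>
definition BN :: "'v set \<Rightarrow> ('v \<Rightarrow> 'a set) \<Rightarrow> ('v \<times> 'v) set \<Rightarrow> (('v \<Rightarrow> 'a) \<Rightarrow> real) set" where
  "BN V D E = {P. is_dist V D P \<and>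
     (\<forall>x\<in>PiE V D. P x = (\<Prod>X\<in>V. marg V D P (insert X (parents E X)) x / marg V D P (parents E X) x))}"

definition merge :: "'v set \<Rightarrow> ('v \<Rightarrow> 'a) \<Rightarrow> ('v \<Rightarrow> 'a) \<Rightarrow> ('v \<Rightarrow> 'a)" where
  "merge Ov a s = (\<lambda>X. if X \<in> Ov then a X else s X)"

text \<open>Selection M[^{S = shat}: distributions Q over O with q(o) = p(o | shat).\<close>
definition selection :: "'v set \<Rightarrow> 'v set \<Rightarrow> ('v \<Rightarrow> 'a set) \<Rightarrow> (('v \<Rightarrow> 'a) \<Rightarrow> real) set
     \<Rightarrow> ('v \<Rightarrow> 'a) \<Rightarrow> (('v \<Rightarrow> 'a) \<Rightarrow> real) set" where
  "selection Ov Sv D M shat = {Q. \<exists>P\<in>M. marg (Ov \<union> Sv) D P Sv shat > 0 \<and>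
     (\<forall>a. Q a = (if a \<in> PiE Ov D then P (merge Ov a shat) / marg (Ov \<union> Sv) D P Sv shat else 0))}"

end

theory Submission
  imports Defs
begin

definition dep_on :: "'v set \<Rightarrow> (('v \<Rightarrow> 'a) \<Rightarrow> real) \<Rightarrow> bool" where
  "dep_on B f \<longleftrightarrow> (\<forall>x y. (\<forall>v\<in>B. x v = y v) \<longrightarrow> f x = f y)"

definition kern :: "'v set \<Rightarrow> ('v \<Rightarrow> 'a set) \<Rightarrow> ('v \<times> 'v) set \<Rightarrow> ('v \<Rightarrow> ('v \<Rightarrow> 'a) \<Rightarrow> real) \<Rightarrow> bool" where
  "kern V D E k \<longleftrightarrow> (\<forall>X\<in>V. (\<forall>x. k X x \<ge> 0) \<and> dep_on (insert X (parents E X)) (k X)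
      \<and> (\<forall>x. (\<Sum>d\<in>D X. k X (x(X:=d))) = 1))"

definition prodk :: "'v set \<Rightarrow> ('v \<Rightarrow> 'a set) \<Rightarrow> ('v \<Rightarrow> ('v \<Rightarrow> 'a) \<Rightarrow> real) \<Rightarrow> ('v \<Rightarrow> 'a) \<Rightarrow> real" where
  "prodk V D k x = (if x \<in> PiE V D then (\<Prod>X\<in>V. k X x) else 0)"

definition anc :: "'v set \<Rightarrow> ('v \<times> 'v) set \<Rightarrow> 'v set \<Rightarrow> bool" where
  "anc V E A \<longleftrightarrow> A \<subseteq> V \<and> (\<forall>Y\<in>A. parents E Y \<subseteq> A)"

lemma sum_PiE_insert:
  assumes "Z \<notin> A"
  shows "sum f (PiE (insert Z A) D) = (\<Sum>y\<in>PiE A D. \<Sum>d\<in>D Z. f (y(Z:=d)))"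
proof -
  have "sum f (PiE (insert Z A) D) = sum (f \<circ> (\<lambda>(y, g). g(Z := y))) (D Z \<times> PiE A D)"
    unfolding PiE_insert_eq by (rule sum.reindex[OF inj_combinator[OF assms]])
  also have "\<dots> = (\<Sum>d\<in>D Z. \<Sum>y\<in>PiE A D. f (y(Z:=d)))"
    by (simp add: sum.cartesian_product split_def)
  also have "\<dots> = (\<Sum>y\<in>PiE A D. \<Sum>d\<in>D Z. f (y(Z:=d)))"
    by (rule sum.swap)
  finally show ?thesis .
qed

lemma finPi: "finite V \<Longrightarrow> \<forall>X\<in>V. finite (D X) \<Longrightarrow> finite (PiE V D)"
  by (rule finite_PiE) auto

lemma finPiC: "finite V \<Longrightarrow> \<forall>X\<in>V. finite (D X) \<Longrightarrow> finite {y \<in> PiE V D. Q y}"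
  by (rule finite_subset[OF _ finPi]) auto

lemma dep_onD: "dep_on B f \<Longrightarrow> (\<And>v. v \<in> B \<Longrightarrow> x v = y v) \<Longrightarrow> f x = f y"
  unfolding dep_on_def by blast

lemma marg_dep: "dep_on B (marg V D P B)"
  unfolding dep_on_def marg_def by simp

lemma marg_nonneg: "\<forall>x. P x \<ge> 0 \<Longrightarrow> marg V D P B x \<ge> 0"
  unfolding marg_def by (simp add: sum_nonneg)

lemma marg_ge:
  assumes "\<forall>x. P x \<ge> 0" "x \<in> PiE V D" "finite V" "\<forall>X\<in>V. finite (D X)"
  shows "P x \<le> marg V D P B x"
  unfolding marg_def
  by (rule member_le_sum) (use assms finPiC in \<open>auto\<close>)

lemma marg_split:
  assumes "X \<in> V" "X \<notin> B" "finite V" "\<forall>X\<in>V. finite (D X)"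
  shows "(\<Sum>d\<in>D X. marg V D P (insert X B) (x(X:=d))) = marg V D P B x"
proof -
  let ?S = "{y \<in> PiE V D. \<forall>a\<in>B. y a = x a}"
  have fS: "finite ?S" using assms(3,4) by (rule finPiC)
  have "(\<Sum>d\<in>D X. sum P {y. y \<in> ?S \<and> y X = d}) = sum P ?S"
    by (rule sum.group[OF fS]) (use assms in \<open>auto simp: PiE_iff\<close>)
  moreover have "\<And>d. marg V D P (insert X B) (x(X:=d)) = sum P {y. y \<in> ?S \<and> y X = d}"
    unfolding marg_def using assms(2) by (intro sum.cong) auto
  ultimately show ?thesis unfolding marg_def[of V D P B] by simp
qed

context
  fixes V :: "'v set" and D :: "'v \<Rightarrow> 'a set" and E :: "('v \<times> 'v) set"
    and k :: "'v \<Rightarrow> ('v \<Rightarrow> 'a) \<Rightarrow> real"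
  assumes finV: "finite V" and finD: "\<forall>X\<in>V. finite (D X) \<and> D X \<noteq> {}"
    and dag: "is_DAG V E" and kk: "kern V D E k"
begin

lemma EV: "E \<subseteq> V \<times> V" using dag unfolding is_DAG_def by auto

lemma wfE: "wf E"
proof -
  have "finite E" using EV finV by (meson finite_SigmaI finite_subset)
  then show ?thesis using dag finite_acyclic_wf unfolding is_DAG_def by blast
qed

lemma kdep: "X \<in> V \<Longrightarrow> (\<And>v. v \<in> insert X (parents E X) \<Longrightarrow> x v = y v) \<Longrightarrow> k X x = k X y"
  using kk unfolding kern_def by (meson dep_onD)

lemma knorm: "X \<in> V \<Longrightarrow> (\<Sum>d\<in>D X. k X (x(X:=d))) = 1"
  using kk unfolding kern_def by blast

lemma knn: "X \<in> V \<Longrightarrow> k X x \<ge> 0"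
  using kk unfolding kern_def by blast

lemma sum_anc:
  assumes "anc V E A" "dep_on A h"
  shows "(\<Sum>y\<in>PiE V D. h y * prodk V D k y) = (\<Sum>y\<in>PiE A D. h y * (\<Prod>Y\<in>A. k Y y))"
  using assms
proof (induction "card (V - A)" arbitrary: A h rule: less_induct)
  case less
  show ?case
  proof (cases "A = V")
    case True then show ?thesis by (auto simp: prodk_def intro: sum.cong)
  next
    case False
    then have ne: "V - A \<noteq> {}" using less.prems unfolding anc_def by auto
    obtain Z where Z: "Z \<in> V - A" "\<And>Q. (Q,Z)\<in>E \<Longrightarrow> Q \<notin> V - A"
      using wfE_min'[OF wfE ne] by blast
    have paZ: "parents E Z \<subseteq> A" using Z EV unfolding parents_def by auto
    let ?A = "insert Z A"
    have ancA: "anc V E ?A" using less.prems(1) paZ Z unfolding anc_def by auto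
    have lt: "card (V - ?A) < card (V - A)"
      using Z finV by (metis Diff_insert card_Diff1_less finite_Diff)
    have depA: "dep_on ?A h" using less.prems(2) unfolding dep_on_def by auto
    have finA: "finite A" using less.prems(1) finV unfolding anc_def by (meson finite_subset)
    have ZA: "Z \<notin> A" using Z by auto
    have "(\<Sum>y\<in>PiE V D. h y * prodk V D k y) = (\<Sum>y\<in>PiE ?A D. h y * (\<Prod>Y\<in>?A. k Y y))"
      by (rule less.hyps[OF lt ancA depA])
    also have "\<dots> = (\<Sum>y\<in>PiE A D. \<Sum>d\<in>D Z. h (y(Z:=d)) * (\<Prod>Y\<in>?A. k Y (y(Z:=d))))"
      by (rule sum_PiE_insert[OF ZA])
    also have "\<dots> = (\<Sum>y\<in>PiE A D. h y * (\<Prod>Y\<in>A. k Y y) * (\<Sum>d\<in>D Z. k Z (y(Z:=d))))"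
    proof (rule sum.cong[OF refl])
      fix y
      have h1: "\<And>d. h (y(Z:=d)) = h y"
        using less.prems(2) ZA by (intro dep_onD[of A h]) auto
      have h2: "\<And>d Y. Y \<in> A \<Longrightarrow> k Y (y(Z:=d)) = k Y y"
      proof -
        fix d Y assume Y: "Y \<in> A"
        then have "Y \<in> V" "parents E Y \<subseteq> A" using less.prems(1) unfolding anc_def by auto
        then show "k Y (y(Z:=d)) = k Y y" using Y ZA by (intro kdep) auto
      qed
      have "\<And>d. (\<Prod>Y\<in>A. k Y (y(Z:=d))) = (\<Prod>Y\<in>A. k Y y)"
        using h2 by (intro prod.cong) auto
      then show "(\<Sum>d\<in>D Z. h (y(Z:=d)) * (\<Prod>Y\<in>?A. k Y (y(Z:=d)))) =
           h y * (\<Prod>Y\<in>A. k Y y) * (\<Sum>d\<in>D Z. k Z (y(Z:=d)))"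
        by (simp add: prod.insert[OF finA ZA] h1 sum_distrib_left mult_ac)
    qed
    also have "\<dots> = (\<Sum>y\<in>PiE A D. h y * (\<Prod>Y\<in>A. k Y y))"
      using knorm Z by simp
    finally show ?thesis .
  qed
qed

lemma marg_anc:
  assumes "anc V E A" "B \<subseteq> A"
  shows "marg V D (prodk V D k) B x = (\<Sum>y\<in>PiE A D. (if \<forall>a\<in>B. y a = x a then 1 else 0) * (\<Prod>Y\<in>A. k Y y))"
proof -
  have fP: "finite (PiE V D)" using finV finD finPi by blast
  have "marg V D (prodk V D k) B x = (\<Sum>y\<in>PiE V D. (if \<forall>a\<in>B. y a = x a then 1 else 0) * prodk V D k y)"
    unfolding marg_def by (auto simp add: sum.inter_filter[OF fP] intro!: sum.cong)
  also have "\<dots> = (\<Sum>y\<in>PiE A D. (if \<forall>a\<in>B. y a = x a then 1 else 0) * (\<Prod>Y\<in>A. k Y y))"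
    by (rule sum_anc[OF assms(1)]) (use assms(2) in \<open>auto simp: dep_on_def; metis subsetD\<close>)
  finally show ?thesis .
qed

lemma key:
  assumes X: "X \<in> V" and x: "x \<in> PiE V D"
  shows "marg V D (prodk V D k) (insert X (parents E X)) x = k X x * marg V D (prodk V D k) (parents E X) x"
proof -
  define W' where "W' = V - {Y. (X,Y) \<in> E\<^sup>+} - {X}"
  let ?pa = "parents E X"
  have acy: "(X,X) \<notin> E\<^sup>+" using dag unfolding is_DAG_def acyclic_def by blast
  have XW': "X \<notin> W'" unfolding W'_def by auto
  have finW': "finite W'" unfolding W'_def using finV by auto
  have ancW: "anc V E (insert X W')"
    unfolding anc_def W'_def parents_def using X EV acy
    by auto (metis acy trancl_into_trancl, meson trancl.trancl_into_trancl)
  have ancW': "anc V E W'"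
    unfolding anc_def W'_def parents_def using X EV
    by (auto intro: trancl_into_trancl)
  have paW': "?pa \<subseteq> W'"
    unfolding W'_def parents_def using X EV acy
    by auto (metis acy trancl_into_trancl)
  have Xpa: "X \<notin> ?pa" using acy unfolding parents_def by auto
  have xX: "x X \<in> D X" using x X by auto
  have "marg V D (prodk V D k) (insert X ?pa) x =
     (\<Sum>y\<in>PiE (insert X W') D. (if \<forall>a\<in>insert X ?pa. y a = x a then 1 else 0) * (\<Prod>Y\<in>insert X W'. k Y y))"
    by (rule marg_anc[OF ancW]) (use paW' in auto)
  also have "\<dots> = (\<Sum>y\<in>PiE W' D. \<Sum>d\<in>D X. (if \<forall>a\<in>insert X ?pa. (y(X:=d)) a = x a then 1 else 0) * (\<Prod>Y\<in>insert X W'. k Y (y(X:=d))))"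
    by (rule sum_PiE_insert[OF XW'])
  also have "\<dots> = (\<Sum>y\<in>PiE W' D. k X x * ((if \<forall>a\<in>?pa. y a = x a then 1 else 0) * (\<Prod>Y\<in>W'. k Y y)))"
  proof (rule sum.cong[OF refl])
    fix y
    have h2: "\<And>d Y. Y \<in> W' \<Longrightarrow> k Y (y(X:=d)) = k Y y"
    proof -
      fix d Y assume Y: "Y \<in> W'"
      then have "Y \<in> V" "X \<notin> insert Y (parents E Y)" unfolding W'_def parents_def by auto
      then show "k Y (y(X:=d)) = k Y y" by (intro kdep) auto
    qed
    have h3: "\<And>d. (\<Prod>Y\<in>W'. k Y (y(X:=d))) = (\<Prod>Y\<in>W'. k Y y)"
      using h2 by (intro prod.cong) auto
    have h4: "\<And>d. (\<forall>a\<in>insert X ?pa. (y(X:=d)) a = x a) \<longleftrightarrow> d = x X \<and> (\<forall>a\<in>?pa. y a = x a)"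
      using Xpa by auto
    have h5: "(\<forall>a\<in>?pa. y a = x a) \<Longrightarrow> k X (y(X:= x X)) = k X x"
      using X by (intro kdep) auto
    have "(\<Sum>d\<in>D X. (if \<forall>a\<in>insert X ?pa. (y(X:=d)) a = x a then 1 else 0) * (\<Prod>Y\<in>insert X W'. k Y (y(X:=d))))
       = (\<Sum>d\<in>D X. if d = x X then (if \<forall>a\<in>?pa. y a = x a then k X (y(X:=d)) * (\<Prod>Y\<in>W'. k Y y) else 0) else 0)"
    proof (intro sum.cong refl)
      fix d assume "d \<in> D X"
      have c1: "(if \<forall>a\<in>insert X ?pa. (y(X:=d)) a = x a then 1 else 0) = (if d = x X \<and> (\<forall>a\<in>?pa. y a = x a) then (1::real) else 0)"
        by (simp only: h4)
      have c2: "(\<Prod>Y\<in>insert X W'. k Y (y(X:=d))) = k X (y(X:=d)) * (\<Prod>Y\<in>W'. k Y y)"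
        by (simp only: prod.insert[OF finW' XW'] h3)
      show "(if \<forall>a\<in>insert X ?pa. (y(X:=d)) a = x a then 1 else 0) * (\<Prod>Y\<in>insert X W'. k Y (y(X:=d)))
         = (if d = x X then (if \<forall>a\<in>?pa. y a = x a then k X (y(X:=d)) * (\<Prod>Y\<in>W'. k Y y) else 0) else 0)"
        unfolding c1 c2 by simp
    qed
    also have "\<dots> = (if \<forall>a\<in>?pa. y a = x a then k X (y(X:=x X)) * (\<Prod>Y\<in>W'. k Y y) else 0)"
      using xX finD X by (simp add: sum.delta)
    also have "\<dots> = k X x * ((if \<forall>a\<in>?pa. y a = x a then 1 else 0) * (\<Prod>Y\<in>W'. k Y y))"
      using h5 by auto
    finally show "(\<Sum>d\<in>D X. (if \<forall>a\<in>insert X ?pa. (y(X:=d)) a = x a then 1 else 0) * (\<Prod>Y\<in>insert X W'. k Y (y(X:=d))))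
       = k X x * ((if \<forall>a\<in>?pa. y a = x a then 1 else 0) * (\<Prod>Y\<in>W'. k Y y))" .
  qed
  also have "\<dots> = k X x * (\<Sum>y\<in>PiE W' D. (if \<forall>a\<in>?pa. y a = x a then 1 else 0) * (\<Prod>Y\<in>W'. k Y y))"
    by (simp add: sum_distrib_left)
  also have "\<dots> = k X x * marg V D (prodk V D k) ?pa x"
    using marg_anc[OF ancW' paW'] by simp
  finally show ?thesis .
qed

lemma prodk_nn: "prodk V D k x \<ge> 0"
  unfolding prodk_def using knn by (auto intro: prod_nonneg)

lemma prodk_dist: "is_dist V D (prodk V D k)"
proof -
  have "(\<Sum>y\<in>PiE V D. (\<lambda>_. 1) y * prodk V D k y) = (\<Sum>y\<in>PiE {} D. (\<lambda>_. 1) y * (\<Prod>Y\<in>{}. k Y y))"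
    by (rule sum_anc) (auto simp: anc_def dep_on_def)
  then have "sum (prodk V D k) (PiE V D) = 1" by simp
  then show ?thesis unfolding is_dist_def using prodk_nn by (auto simp: prodk_def)
qed

lemma prodk_BN: "prodk V D k \<in> BN V D E"
proof -
  let ?P = "prodk V D k"
  have "?P x = (\<Prod>X\<in>V. marg V D ?P (insert X (parents E X)) x / marg V D ?P (parents E X) x)"
    if x: "x \<in> PiE V D" for x
  proof (cases "\<forall>X\<in>V. marg V D ?P (parents E X) x > 0")
    case True
    then have "\<And>X. X \<in> V \<Longrightarrow> marg V D ?P (insert X (parents E X)) x / marg V D ?P (parents E X) x = k X x"
      using key[OF _ x] by (metis less_irrefl nonzero_mult_div_cancel_right)
    then show ?thesis using x by (simp add: prodk_def)
  next
    case False
    then obtain X where X: "X \<in> V" "\<not> marg V D ?P (parents E X) x > 0" by blast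
    have "marg V D ?P (parents E X) x \<ge> 0" using prodk_nn marg_nonneg by blast
    then have m0: "marg V D ?P (parents E X) x = 0" using X by auto
    have "?P x \<le> marg V D ?P (parents E X) x"
      using marg_ge prodk_nn x finV finD by blast
    then have "?P x = 0" using prodk_nn[of x] m0 by auto
    moreover have "(\<Prod>X\<in>V. marg V D ?P (insert X (parents E X)) x / marg V D ?P (parents E X) x) = 0"
      using X m0 finV by (intro prod_zero) auto
    ultimately show ?thesis by simp
  qed
  then show ?thesis unfolding BN_def using prodk_dist by auto
qed

end

lemma BN_kern:
  assumes finV: "finite V" and finD: "\<forall>X\<in>V. finite (D X) \<and> D X \<noteq> {}"
    and dag: "is_DAG V E" and P: "P \<in> BN V D E"
  shows "\<exists>k. kern V D E k \<and> P = prodk V D k"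
proof -
  have Pd: "is_dist V D P" and Peq: "\<And>x. x \<in> PiE V D \<Longrightarrow> P x = (\<Prod>X\<in>V. marg V D P (insert X (parents E X)) x / marg V D P (parents E X) x)"
    using P unfolding BN_def by auto
  have Pnn: "\<forall>x. P x \<ge> 0" and Pz: "\<And>x. x \<notin> PiE V D \<Longrightarrow> P x = 0" and Ps: "sum P (PiE V D) = 1"
    using Pd unfolding is_dist_def by auto
  have finD': "\<forall>X\<in>V. finite (D X)" using finD by auto
  define k where "k X x = (if marg V D P (parents E X) x > 0
      then marg V D P (insert X (parents E X)) x / marg V D P (parents E X) x else 1 / real (card (D X)))" for X x
  have Xpa: "X \<notin> parents E X" for X
    using dag unfolding is_DAG_def parents_def acyclic_def by auto
  have kk: "kern V D E k"
    unfolding kern_def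
  proof (intro ballI conjI allI)
    fix X x assume X: "X \<in> V"
    show "k X x \<ge> 0" unfolding k_def using marg_nonneg[OF Pnn] by auto
    show "dep_on (insert X (parents E X)) (k X)"
      unfolding dep_on_def k_def
    proof (intro allI impI)
      fix x y :: "'a \<Rightarrow> 'b" assume a: "\<forall>v\<in>insert X (parents E X). x v = y v"
      have "marg V D P (parents E X) x = marg V D P (parents E X) y"
        by (rule dep_onD[OF marg_dep]) (use a in auto)
      moreover have "marg V D P (insert X (parents E X)) x = marg V D P (insert X (parents E X)) y"
        by (rule dep_onD[OF marg_dep]) (use a in auto)
      ultimately show "(if marg V D P (parents E X) x > 0
      then marg V D P (insert X (parents E X)) x / marg V D P (parents E X) x else 1 / real (card (D X))) =
        (if marg V D P (parents E X) y > 0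
      then marg V D P (insert X (parents E X)) y / marg V D P (parents E X) y else 1 / real (card (D X)))"
        by simp
    qed
    have mp: "\<And>d. marg V D P (parents E X) (x(X:=d)) = marg V D P (parents E X) x"
      by (rule dep_onD[OF marg_dep]) (use Xpa in auto)
    show "(\<Sum>d\<in>D X. k X (x(X:=d))) = 1"
    proof (cases "marg V D P (parents E X) x > 0")
      case True
      then have "(\<Sum>d\<in>D X. k X (x(X:=d))) = (\<Sum>d\<in>D X. marg V D P (insert X (parents E X)) (x(X:=d))) / marg V D P (parents E X) x"
        unfolding k_def mp by (simp add: sum_divide_distrib)
      also have "\<dots> = 1" using marg_split[OF X Xpa finV finD'] True by simp
      finally show ?thesis .
    next
      case False
      have "card (D X) > 0" using finD X by (simp add: card_gt_0_iff)
      then show ?thesis using False unfolding k_def mp by simp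
    qed
  qed
  let ?Q = "prodk V D k"
  have fP: "finite (PiE V D)" using finPi finV finD' by blast
  have le: "P x \<le> ?Q x" if x: "x \<in> PiE V D" for x
  proof (cases "\<forall>X\<in>V. marg V D P (parents E X) x > 0")
    case True
    then show ?thesis using x Peq[OF x] by (simp add: prodk_def k_def)
  next
    case False
    then obtain X where X: "X \<in> V" "\<not> marg V D P (parents E X) x > 0" by blast
    then have "marg V D P (parents E X) x = 0" using marg_nonneg[OF Pnn, of V D "parents E X" x] by linarith
    then have "P x \<le> 0" using marg_ge[OF Pnn x finV finD'] by metis
    then show ?thesis using prodk_nn[OF finV finD dag kk] by (meson order_trans)
  qed
  have sQ: "sum ?Q (PiE V D) = 1" using prodk_dist[OF finV finD dag kk] unfolding is_dist_def by auto
  have "(\<Sum>x\<in>PiE V D. ?Q x - P x) = 0" using sQ Ps by (simp add: sum_subtractf)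
  then have "\<forall>x\<in>PiE V D. ?Q x - P x = 0"
    using sum_nonneg_eq_0_iff[OF fP, of "\<lambda>x. ?Q x - P x"] le by auto
  then have "P = ?Q" using Pz by (auto simp: prodk_def)
  then show ?thesis using kk by blast
qed

lemma dep_on_mono: "dep_on A f \<Longrightarrow> A \<subseteq> B \<Longrightarrow> dep_on B f"
  unfolding dep_on_def by blast

theorem lemma3:
  fixes Ov Sv :: "'v set" and D :: "'v \<Rightarrow> 'a set" and E :: "('v \<times> 'v) set"
    and shat :: "'v \<Rightarrow> 'a"
  assumes "finite (Ov \<union> Sv)" and "Ov \<inter> Sv = {}"
    and "\<forall>X\<in>Ov \<union> Sv. finite (D X) \<and> D X \<noteq> {}"
    and "is_DAG (Ov \<union> Sv) E"
    and "shat \<in> PiE Sv D"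
  shows "selection Ov Sv D (BN (Ov \<union> Sv) D {(a, b) \<in> E. a \<notin> Sv}) shat
       = selection Ov Sv D (BN (Ov \<union> Sv) D E) shat"
proof -
  define V where "V = Ov \<union> Sv"
  define E' where "E' = {(a, b) \<in> E. a \<notin> Sv}"
  have finV: "finite V" and finD: "\<forall>X\<in>V. finite (D X) \<and> D X \<noteq> {}" and dag: "is_DAG V E"
    using assms unfolding V_def by auto
  have dag': "is_DAG V E'" using dag unfolding is_DAG_def E'_def
    by (auto intro: acyclic_subset)
  have paE': "parents E' X = parents E X - Sv" for X unfolding parents_def E'_def by auto
  have sub: "BN V D E' \<subseteq> BN V D E"
  proof
    fix P assume "P \<in> BN V D E'"
    then obtain k where k: "kern V D E' k" "P = prodk V D k" using BN_kern[OF finV finD dag'] by blast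
    have "kern V D E k" using k(1) unfolding kern_def paE'
      by (auto elim: dep_on_mono)
    then show "P \<in> BN V D E" using prodk_BN[OF finV finD dag] k(2) by simp
  qed
  have sup: "selection Ov Sv D (BN V D E) shat \<subseteq> selection Ov Sv D (BN V D E') shat"
  proof
    fix Q assume "Q \<in> selection Ov Sv D (BN V D E) shat"
    then obtain P where P: "P \<in> BN V D E" "marg V D P Sv shat > 0"
      "\<forall>a. Q a = (if a \<in> PiE Ov D then P (merge Ov a shat) / marg V D P Sv shat else 0)"
      unfolding selection_def V_def by blast
    obtain k where k: "kern V D E k" "P = prodk V D k" using BN_kern[OF finV finD dag P(1)] by blast
    define ov where "ov X y = (\<lambda>v. if v \<in> Sv \<and> v \<noteq> X then shat v else y v)" for X y
    define k' where "k' X y = k X (ov X y)" for X y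
    have kk': "kern V D E' k'"
      unfolding kern_def
    proof (intro ballI conjI allI)
      fix X x assume X: "X \<in> V"
      show "k' X x \<ge> 0" unfolding k'_def using k(1) X unfolding kern_def by blast
      show "dep_on (insert X (parents E' X)) (k' X)"
        unfolding dep_on_def k'_def
      proof (intro allI impI)
        fix x y :: "'v \<Rightarrow> 'a" assume a: "\<forall>v\<in>insert X (parents E' X). x v = y v"
        have "dep_on (insert X (parents E X)) (k X)" using k(1) X unfolding kern_def by blast
        then show "k X (ov X x) = k X (ov X y)"
          by (rule dep_onD) (use a in \<open>auto simp: ov_def paE'\<close>)
      qed
      have "\<And>d. ov X (x(X:=d)) = (ov X x)(X:=d)" unfolding ov_def by auto
      then show "(\<Sum>d\<in>D X. k' X (x(X:=d))) = 1"
        unfolding k'_def using k(1) X unfolding kern_def by simp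
    qed
    define P' where "P' = prodk V D k'"
    have P'BN: "P' \<in> BN V D E'" unfolding P'_def by (rule prodk_BN[OF finV finD dag' kk'])
    have eq: "P' y = P y" if "y \<in> PiE V D" "\<forall>v\<in>Sv. y v = shat v" for y
    proof -
      have "\<And>X. ov X y = y" unfolding ov_def using that(2) by auto
      then show ?thesis unfolding P'_def k(2) prodk_def k'_def by simp
    qed
    have meq: "marg V D P' Sv shat = marg V D P Sv shat"
      unfolding marg_def using eq by (intro sum.cong) auto
    have "\<forall>a. Q a = (if a \<in> PiE Ov D then P' (merge Ov a shat) / marg V D P' Sv shat else 0)"
    proof
      fix a
      show "Q a = (if a \<in> PiE Ov D then P' (merge Ov a shat) / marg V D P' Sv shat else 0)"
      proof (cases "a \<in> PiE Ov D")
        case True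
        have "merge Ov a shat \<in> PiE V D" using True assms(5) unfolding V_def merge_def
          by (auto simp: PiE_iff extensional_def)
        moreover have "\<forall>v\<in>Sv. merge Ov a shat v = shat v" using assms(2) unfolding merge_def by auto
        ultimately show ?thesis using P(3) True meq eq by simp
      next
        case False then show ?thesis using P(3) by simp
      qed
    qed
    then show "Q \<in> selection Ov Sv D (BN V D E') shat"
      unfolding selection_def V_def[symmetric] using P'BN P(2) meq by (intro CollectI bexI[of _ P']) auto
  qed
  have "selection Ov Sv D (BN V D E') shat \<subseteq> selection Ov Sv D (BN V D E) shat"
    using sub unfolding selection_def by blast
  then show ?thesis using sup unfolding V_def E'_def by blast
qed

end
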